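(* Let $1\le p<\infty$ and $k>0$. The set of isomorphism classes of compact pmm-spaces, endowed with the metric $\mathsf{PGW}^k_p$, is not complete.
   Context: A pmm-space is a triple $(X,d_X,\mu_X)$ with $(X,d_X)$ a complete separable metric space and $\mu_X$ a Borel probability measure; compact means $(X,d_X)$ compact. Isomorphic means there is a measure-preserving isometric bijection. For a measure $\pi$ on $X\times Y$, $\pi_X,\pi_Y$ are its marginals and $\|d_X-d_Y\|_{L^p(\pi\otimes\pi)}=\left(\iint|d_X(x,x')-d_Y(y,y')|^p\,d\pi(x,y)\,d\pi(x',y')\right)^{1/p}$. For scalar $\epsilon\ge0$: $\mathsf{PGW}_{\epsilon,p}(X,Y)=\inf\{\|d_X-d_Y\|_{L^p(\pi\otimes\pi)}:\pi$ Borel probability measure on $X\times Y$, $\pi_X\le(1+\epsilon)\mu_X$, $\pi_Y\le(1+\epsilon)\mu_Y$ setwise$\}$, and $\mathsf{PGW}^k_p(X,Y)=\inf\{\frac{\epsilon}{1+\epsilon}:\epsilon\ge0,\ \mathsf{PGW}_{\epsilon,p}(X,Y)\le k\epsilon\}$. *)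

theory Defs
  imports "HOL-Probability.Probability"
begin

definition borel_of :: "'a topology \<Rightarrow> 'a measure" where
  "borel_of T = sigma (topspace T) {U. openin T U}"

text \<open>A pmm-space is represented as a triple (X, d, mu): carrier set X, metric d on X,
  and a Borel probability measure mu on the metric topology of (X,d).\<close>
type_synonym 'a pmm = "'a set \<times> ('a \<Rightarrow> 'a \<Rightarrow> real) \<times> 'a measure"

definition pmm_space :: "'a pmm \<Rightarrow> bool" where
  "pmm_space \<X> \<longleftrightarrow> (case \<X> of (X, d, \<mu>) \<Rightarrow>
     Metric_space X d \<and> Metric_space.mcomplete X d \<and>
     separable_space (Metric_space.mtopology X d) \<and>
     prob_space \<mu> \<and> space \<mu> = X \<and>
     sets \<mu> = sets (borel_of (Metric_space.mtopology X d)))"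

definition compact_pmm_space :: "'a pmm \<Rightarrow> bool" where
  "compact_pmm_space \<X> \<longleftrightarrow> pmm_space \<X> \<and>
     (case \<X> of (X, d, \<mu>) \<Rightarrow> compact_space (Metric_space.mtopology X d))"

definition pgw_couplings :: "real \<Rightarrow> 'a pmm \<Rightarrow> 'b pmm \<Rightarrow> ('a \<times> 'b) measure set" where
  "pgw_couplings \<epsilon> \<X> \<Y> = (case \<X> of (X, dX, \<mu>X) \<Rightarrow> case \<Y> of (Y, dY, \<mu>Y) \<Rightarrow>
     {\<pi>. prob_space \<pi> \<and> space \<pi> = X \<times> Y \<and>
        sets \<pi> = sets (borel_of (prod_topology (Metric_space.mtopology X dX)
                                              (Metric_space.mtopology Y dY))) \<and>
        (\<forall>A \<in> sets \<mu>X. emeasure \<pi> (A \<times> Y) \<le> ennreal (1 + \<epsilon>) * emeasure \<mu>X A) \<and>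
        (\<forall>B \<in> sets \<mu>Y. emeasure \<pi> (X \<times> B) \<le> ennreal (1 + \<epsilon>) * emeasure \<mu>Y B)})"

definition dist_Lp :: "real \<Rightarrow> 'a pmm \<Rightarrow> 'b pmm \<Rightarrow> ('a \<times> 'b) measure \<Rightarrow> real" where
  "dist_Lp p \<X> \<Y> \<pi> = (case \<X> of (X, dX, \<mu>X) \<Rightarrow> case \<Y> of (Y, dY, \<mu>Y) \<Rightarrow>
     (enn2real (\<integral>\<^sup>+ z. \<integral>\<^sup>+ z'. ennreal (\<bar>dX (fst z) (fst z') - dY (snd z) (snd z')\<bar> powr p) \<partial>\<pi> \<partial>\<pi>))
       powr (1 / p))"

definition PGW_eps :: "real \<Rightarrow> real \<Rightarrow> 'a pmm \<Rightarrow> 'b pmm \<Rightarrow> real" where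
  "PGW_eps \<epsilon> p \<X> \<Y> = Inf (dist_Lp p \<X> \<Y> ` pgw_couplings \<epsilon> \<X> \<Y>)"

definition PGW_k :: "real \<Rightarrow> real \<Rightarrow> 'a pmm \<Rightarrow> 'b pmm \<Rightarrow> real" where
  "PGW_k k p \<X> \<Y> = Inf {\<epsilon> / (1 + \<epsilon>) | \<epsilon>. \<epsilon> \<ge> 0 \<and> PGW_eps \<epsilon> p \<X> \<Y> \<le> k * \<epsilon>}"

end

theory Submission
  imports Defs
begin

lemma borel_of_sets_open: "openin T U \<Longrightarrow> U \<in> sets (borel_of T)"
  unfolding borel_of_def
  by (subst sets_measure_of) (auto dest: openin_subset)

lemma space_borel_of[simp]: "space (borel_of T) = topspace T"
  unfolding borel_of_def
  by (subst space_measure_of) (auto dest: openin_subset)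

lemma disc_borel:
  assumes "\<And>U. U \<subseteq> topspace T \<Longrightarrow> openin T U"
  shows "sets (borel_of T) = Pow (topspace T)"
proof -
  have e: "{U. openin T U} = Pow (topspace T)" using openin_subset assms by auto
  show ?thesis unfolding borel_of_def e
    by (simp add: sigma_algebra.sigma_sets_eq sigma_algebra_Pow)
qed

lemma MX: "Metric_space S (dist::real\<Rightarrow>real\<Rightarrow>real)"
  by (metis Met_TC.subspace subset_UNIV)

definition Xs :: "nat \<Rightarrow> real set" where "Xs n = real ` {..n}"

lemma Xs_open:
  assumes "U \<subseteq> Xs n"
  shows "openin (Metric_space.mtopology (Xs n) dist) U"
proof -
  interpret M: Metric_space "Xs n" dist by (rule MX)
  have b: "M.mball x 1 = {x}" if "x \<in> Xs n" for x
  proof -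
    have "y = x" if "y \<in> Xs n" "dist x y < 1" for y
      using that \<open>x \<in> Xs n\<close> unfolding Xs_def dist_real_def by auto
    then show ?thesis using that by (auto simp: M.mball_def)
  qed
  have "U = \<Union> ((\<lambda>x. M.mball x 1) ` U)" using b assms by auto
  also have "openin M.mtopology \<dots>" by (rule openin_Union) auto
  finally show ?thesis .
qed

definition fr :: "nat \<Rightarrow> real \<Rightarrow> real" where
  "fr n x = (if x = real n then (1/2)^n else (1/2)^(Suc (nat \<lfloor>x\<rfloor>)))"
definition fm :: "nat \<Rightarrow> real \<Rightarrow> ennreal" where "fm n x = ennreal (fr n x)"
definition XX :: "nat \<Rightarrow> real pmm" where "XX n = (Xs n, dist, point_measure (Xs n) (fm n))"

lemma fr_nonneg: "0 \<le> fr n x" by (simp add: fr_def)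

lemma geo_sum: "(\<Sum>j<n. (1/2::real)^(Suc j)) = 1 - (1/2)^n"
  by (induction n) auto

lemma fin_Xs[simp]: "finite (Xs n)" by (simp add: Xs_def)

lemma sum_Xs: "(\<Sum>x\<in>Xs n. g x) = (\<Sum>j\<le>n. g (real j))"
  unfolding Xs_def by (subst sum.reindex) (auto simp: inj_on_def)

lemma sum_fr: "(\<Sum>x\<in>Xs n. fr n x) = 1"
proof -
  have "(\<Sum>j\<le>n. fr n (real j)) = (\<Sum>j<n. fr n (real j)) + fr n (real n)"
    by (simp add: lessThan_Suc_atMost[symmetric])
  also have "(\<Sum>j<n. fr n (real j)) = (\<Sum>j<n. (1/2::real)^(Suc j))"
    by (rule sum.cong) (auto simp: fr_def)
  finally show ?thesis using geo_sum[of n] by (simp add: sum_Xs fr_def)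
qed

lemma sum_fm: "(\<Sum>x\<in>Xs n. fm n x) = 1"
  unfolding fm_def using sum_fr[of n] by (simp add: sum_ennreal fr_nonneg)

lemma prob_XX: "prob_space (point_measure (Xs n) (fm n))"
  by (rule prob_space_point_measure) (auto simp: sum_fm)

lemma sets_mtop_Xs: "sets (borel_of (Metric_space.mtopology (Xs n) dist)) = Pow (Xs n)"
  using disc_borel[of "Metric_space.mtopology (Xs n) dist"] Xs_open[of _ n]
  by (simp add: Metric_space.topspace_mtopology[OF MX])

lemma compact_XX: "compact_pmm_space (XX n)"
  unfolding compact_pmm_space_def pmm_space_def XX_def
proof (simp, intro conjI)
  show "Metric_space (Xs n) dist" by (rule MX)
  show cs: "compact_space (Metric_space.mtopology (Xs n) dist)"
    unfolding compact_space_def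
    by (rule finite_imp_compactin) (auto simp: Metric_space.topspace_mtopology[OF MX])
  show "Metric_space.mcomplete (Xs n) dist"
    by (rule Metric_space.compact_space_imp_mcomplete[OF MX cs])
  show "separable_space (Metric_space.mtopology (Xs n) dist)"
    unfolding separable_space_def
    using closure_of_topspace[of "Metric_space.mtopology (Xs n) dist"]
    by (intro exI[of _ "Xs n"]) (auto simp: Metric_space.topspace_mtopology[OF MX] countable_finite)
  show "prob_space (point_measure (Xs n) (fm n))" by (rule prob_XX)
  show "space (point_measure (Xs n) (fm n)) = Xs n" by (simp add: space_point_measure)
  show "sets (point_measure (Xs n) (fm n)) = sets (borel_of (Metric_space.mtopology (Xs n) dist))"
    by (simp add: sets_point_measure sets_mtop_Xs)
qed

abbreviation "TX n \<equiv> Metric_space.mtopology (Xs n) (dist::real\<Rightarrow>real\<Rightarrow>real)"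

lemma topspace_TX[simp]: "topspace (TX n) = Xs n"
  by (simp add: Metric_space.topspace_mtopology[OF MX])

lemma prod_open:
  assumes "U \<subseteq> Xs a \<times> Xs b" shows "openin (prod_topology (TX a) (TX b)) U"
proof -
  have "U = \<Union> ((\<lambda>z. {fst z} \<times> {snd z}) ` U)" by auto
  also have "openin (prod_topology (TX a) (TX b)) \<dots>"
  proof (intro openin_Union, clarsimp)
    fix x y assume "(x, y) \<in> U"
    then have "openin (prod_topology (TX a) (TX b)) ({x} \<times> {y})"
      using assms by (subst openin_prod_Times_iff) (auto intro!: Xs_open)
    then show "openin (prod_topology (TX a) (TX b)) {(x, y)}" by simp
  qed
  finally show ?thesis .
qed

lemma sets_prod_XX: "sets (borel_of (prod_topology (TX a) (TX b))) = Pow (Xs a \<times> Xs b)"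
  using disc_borel[of "prod_topology (TX a) (TX b)"] prod_open[of _ a b] by simp

definition wt :: "real \<Rightarrow> real" where "wt x = (1/2)^(Suc (nat \<lfloor>x\<rfloor>))"

definition PN :: "nat \<Rightarrow> real set" where "PN N = real ` {..<N}"

lemma PN_sub: "N \<le> a \<Longrightarrow> PN N \<subseteq> Xs a" by (auto simp: PN_def Xs_def)

lemma fr_PN: "N \<le> a \<Longrightarrow> x \<in> PN N \<Longrightarrow> fr a x = wt x"
  by (auto simp: PN_def fr_def wt_def)

lemma sum_wt_PN: "(\<Sum>x\<in>PN N. wt x) = 1 - (1/2)^N"
proof -
  have "(\<Sum>x\<in>PN N. wt x) = (\<Sum>j<N. wt (real j))"
    unfolding PN_def by (subst sum.reindex) (auto simp: inj_on_def)
  also have "\<dots> = (\<Sum>j<N. (1/2::real)^(Suc j))" by (simp add: wt_def)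
  finally show ?thesis using geo_sum[of N] by simp
qed

lemma coupI:
  assumes "prob_space \<pi>" "space \<pi> = X \<times> Y"
    "sets \<pi> = sets (borel_of (prod_topology (Metric_space.mtopology X dX) (Metric_space.mtopology Y dY)))"
    "\<And>A. A \<in> sets \<mu>X \<Longrightarrow> emeasure \<pi> (A \<times> Y) \<le> ennreal (1 + \<epsilon>) * emeasure \<mu>X A"
    "\<And>B. B \<in> sets \<mu>Y \<Longrightarrow> emeasure \<pi> (X \<times> B) \<le> ennreal (1 + \<epsilon>) * emeasure \<mu>Y B"
  shows "\<pi> \<in> pgw_couplings \<epsilon> (X, dX, \<mu>X) (Y, dY, \<mu>Y)"
  using assms unfolding pgw_couplings_def by simp

lemma coupD:
  assumes "\<pi> \<in> pgw_couplings \<epsilon> (X, dX, \<mu>X) (Y, dY, \<mu>Y)"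
  shows "prob_space \<pi>" "space \<pi> = X \<times> Y"
    "sets \<pi> = sets (borel_of (prod_topology (Metric_space.mtopology X dX) (Metric_space.mtopology Y dY)))"
    "\<And>A. A \<in> sets \<mu>X \<Longrightarrow> emeasure \<pi> (A \<times> Y) \<le> ennreal (1 + \<epsilon>) * emeasure \<mu>X A"
    "\<And>B. B \<in> sets \<mu>Y \<Longrightarrow> emeasure \<pi> (X \<times> B) \<le> ennreal (1 + \<epsilon>) * emeasure \<mu>Y B"
  using assms unfolding pgw_couplings_def by simp_all

lemma dist_Lp_nonneg: "0 \<le> dist_Lp p X Y \<pi>"
  unfolding dist_Lp_def by (auto split: prod.splits)

lemma cauchy_bound:
  assumes "1 \<le> N" "N \<le> a" "N \<le> b" "0 \<le> k"
  shows "PGW_k k p (XX a) (XX b) \<le> (1/2)^N"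
proof -
  define q :: real where "q = (1/2)^N"
  have q0: "0 < q" and q1: "q \<le> 1/2" unfolding q_def using assms(1)
    using power_decreasing[of 1 N "1/2::real"] by auto
  define c where "c = 1 / (1 - q)"
  define \<epsilon> where "\<epsilon> = q / (1 - q)"
  have c0: "0 < c" using q1 by (simp add: c_def)
  have ce: "1 + \<epsilon> = c" using q1 by (simp add: c_def \<epsilon>_def field_simps)
  have e0: "0 \<le> \<epsilon>" using q0 q1 by (simp add: \<epsilon>_def)
  have ee: "\<epsilon> / (1 + \<epsilon>) = q" using q1 by (simp add: \<epsilon>_def field_simps)
  define hr :: "real \<times> real \<Rightarrow> real" where
    "hr z = (if fst z = snd z \<and> fst z \<in> PN N then c * wt (fst z) else 0)" for z
  have hr0: "0 \<le> hr z" for z using c0 by (simp add: hr_def wt_def)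
  define \<pi> where "\<pi> = point_measure (Xs a \<times> Xs b) (\<lambda>z. ennreal (hr z))"
  define g where "g x = (if x \<in> PN N then c * wt x else 0)" for x
  have inner: "(\<Sum>y\<in>Xs b. hr (x, y)) = g x" for x
  proof (cases "x \<in> PN N")
    case True
    then have "x \<in> Xs b" using PN_sub[OF assms(3)] by auto
    have "(\<Sum>y\<in>Xs b. hr (x, y)) = (\<Sum>y\<in>Xs b. if x = y then c * wt x else 0)"
      by (rule sum.cong) (auto simp: hr_def True)
    also have "\<dots> = c * wt x" using \<open>x \<in> Xs b\<close> by simp
    finally show ?thesis by (simp add: g_def True)
  qed (simp add: hr_def g_def)
  have inner2: "(\<Sum>x\<in>Xs a. hr (x, y)) = g y" for y
  proof (cases "y \<in> PN N")
    case True
    then have "y \<in> Xs a" using PN_sub[OF assms(2)] by auto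
    have "(\<Sum>x\<in>Xs a. hr (x, y)) = (\<Sum>x\<in>Xs a. if x = y then c * wt y else 0)"
      by (rule sum.cong) (auto simp: hr_def True)
    also have "\<dots> = c * wt y" using \<open>y \<in> Xs a\<close> by simp
    finally show ?thesis by (simp add: g_def True)
  next
    case False
    have "hr (x, y) = 0" for x using False unfolding hr_def by (cases "x = y") simp_all
    then show ?thesis by (simp add: g_def False)
  qed
  have sumA: "(\<Sum>z\<in>A \<times> Xs b. hr z) = (\<Sum>x\<in>A. g x)" if "A \<subseteq> Xs a" for A
  proof -
    show ?thesis by (simp only: sum.cartesian_product' inner)
  qed
  have sumB: "(\<Sum>z\<in>Xs a \<times> B. hr z) = (\<Sum>y\<in>B. g y)" if "B \<subseteq> Xs b" for B
  proof -
    have "(\<Sum>z\<in>Xs a \<times> B. hr z) = (\<Sum>x\<in>Xs a. \<Sum>y\<in>B. hr (x, y))"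
      by (simp only: sum.cartesian_product')
    also have "\<dots> = (\<Sum>y\<in>B. \<Sum>x\<in>Xs a. hr (x, y))" by (rule sum.swap)
    finally show ?thesis by (simp add: inner2)
  qed
  have gle: "g x \<le> c * fr m x" if "N \<le> m" for x m
    using fr_PN[OF that, of x] c0 fr_nonneg[of m x] by (auto simp: g_def)
  have tot: "(\<Sum>z\<in>Xs a \<times> Xs b. hr z) = 1"
  proof -
    have "(\<Sum>z\<in>Xs a \<times> Xs b. hr z) = (\<Sum>x\<in>Xs a. g x)" by (rule sumA) simp
    also have "\<dots> = (\<Sum>x\<in>PN N. g x)"
      by (rule sum.mono_neutral_right) (use PN_sub[OF assms(2)] in \<open>auto simp: g_def\<close>)
    also have "\<dots> = (\<Sum>x\<in>PN N. c * wt x)" by (rule sum.cong) (auto simp: g_def)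
    also have "\<dots> = c * (1 - q)" by (simp only: sum_distrib_left[symmetric] sum_wt_PN q_def)
    also have "\<dots> = 1" using q1 by (simp add: c_def)
    finally show ?thesis .
  qed
  have sets\<pi>: "sets \<pi> = Pow (Xs a \<times> Xs b)" by (simp add: \<pi>_def sets_point_measure)
  have coup: "\<pi> \<in> pgw_couplings \<epsilon> (XX a) (XX b)"
    unfolding XX_def
  proof (rule coupI)
    show "prob_space \<pi>" unfolding \<pi>_def
      by (rule prob_space_point_measure) (auto simp: sum_ennreal hr0 tot)
    show "space \<pi> = Xs a \<times> Xs b" by (simp add: \<pi>_def space_point_measure)
    show "sets \<pi> = sets (borel_of (prod_topology (TX a) (TX b)))"
      by (simp add: sets\<pi> sets_prod_XX)
  next
    fix A assume Yin: "A \<in> sets (point_measure (Xs a) (fm a))"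
    have Y: "A \<subseteq> Xs a" using Yin by (simp add: sets_point_measure)
    have e1: "emeasure \<pi> (A \<times> Xs b) = (\<Sum>z\<in>A \<times> Xs b. ennreal (hr z))"
      unfolding \<pi>_def by (rule emeasure_point_measure_finite) (use Y in auto)
    have e2: "(\<Sum>z\<in>A \<times> Xs b. ennreal (hr z)) = ennreal (\<Sum>z\<in>A \<times> Xs b. hr z)"
      by (rule sum_ennreal) (rule hr0)
    have e3: "(\<Sum>z\<in>A \<times> Xs b. hr z) = (\<Sum>x\<in>A. g x)" by (rule sumA[OF Y])
    have e4: "(\<Sum>x\<in>A. g x) \<le> (1 + \<epsilon>) * (\<Sum>x\<in>A. fr a x)"
      unfolding ce sum_distrib_left by (rule sum_mono) (rule gle[OF assms(2)])
    have e5: "emeasure (point_measure (Xs a) (fm a)) A = (\<Sum>x\<in>A. fm a x)"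
      by (rule emeasure_point_measure_finite) (use Y in auto)
    have e6: "(\<Sum>x\<in>A. fm a x) = ennreal (\<Sum>x\<in>A. fr a x)"
      unfolding fm_def by (rule sum_ennreal) (rule fr_nonneg)
    have e7: "0 \<le> (\<Sum>x\<in>A. fr a x)" by (rule sum_nonneg) (rule fr_nonneg)
    have e8: "0 \<le> 1 + \<epsilon>" using e0 by simp
    show "emeasure \<pi> (A \<times> Xs b) \<le> ennreal (1 + \<epsilon>) * emeasure (point_measure (Xs a) (fm a)) A"
      unfolding e1 e2 e3 e5 e6 ennreal_mult[OF e8 e7, symmetric] by (rule ennreal_leI[OF e4])
  next
    fix B assume Yin: "B \<in> sets (point_measure (Xs b) (fm b))"
    have Y: "B \<subseteq> Xs b" using Yin by (simp add: sets_point_measure)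
    have e1: "emeasure \<pi> (Xs a \<times> B) = (\<Sum>z\<in>Xs a \<times> B. ennreal (hr z))"
      unfolding \<pi>_def by (rule emeasure_point_measure_finite) (use Y in auto)
    have e2: "(\<Sum>z\<in>Xs a \<times> B. ennreal (hr z)) = ennreal (\<Sum>z\<in>Xs a \<times> B. hr z)"
      by (rule sum_ennreal) (rule hr0)
    have e3: "(\<Sum>z\<in>Xs a \<times> B. hr z) = (\<Sum>x\<in>B. g x)" by (rule sumB[OF Y])
    have e4: "(\<Sum>x\<in>B. g x) \<le> (1 + \<epsilon>) * (\<Sum>x\<in>B. fr b x)"
      unfolding ce sum_distrib_left by (rule sum_mono) (rule gle[OF assms(3)])
    have e5: "emeasure (point_measure (Xs b) (fm b)) B = (\<Sum>x\<in>B. fm b x)"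
      by (rule emeasure_point_measure_finite) (use Y in auto)
    have e6: "(\<Sum>x\<in>B. fm b x) = ennreal (\<Sum>x\<in>B. fr b x)"
      unfolding fm_def by (rule sum_ennreal) (rule fr_nonneg)
    have e7: "0 \<le> (\<Sum>x\<in>B. fr b x)" by (rule sum_nonneg) (rule fr_nonneg)
    have e8: "0 \<le> 1 + \<epsilon>" using e0 by simp
    show "emeasure \<pi> (Xs a \<times> B) \<le> ennreal (1 + \<epsilon>) * emeasure (point_measure (Xs b) (fm b)) B"
      unfolding e1 e2 e3 e5 e6 ennreal_mult[OF e8 e7, symmetric] by (rule ennreal_leI[OF e4])
  qed
  define F where "F z z' = ennreal (\<bar>dist (fst z) (fst z') - dist (snd z) (snd z')\<bar> powr p)"
    for z z' :: "real \<times> real"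
  have in0: "ennreal (hr z) * (\<integral>\<^sup>+ z'. F z z' \<partial>\<pi>) = 0" for z
  proof (cases "hr z = 0")
    case False
    then have zd: "fst z = snd z" by (auto simp: hr_def split: if_splits)
    have "(\<integral>\<^sup>+ z'. F z z' \<partial>\<pi>) = (\<Sum>z'\<in>Xs a \<times> Xs b. ennreal (hr z') * F z z')"
      by (simp add: \<pi>_def nn_integral_point_measure_finite)
    also have "\<dots> = 0"
    proof (rule sum.neutral, intro ballI)
      fix z' show "ennreal (hr z') * F z z' = 0"
      proof (cases "hr z' = 0")
        case False
        then have "fst z' = snd z'" by (auto simp: hr_def split: if_splits)
        then show ?thesis using zd by (simp add: F_def)
      qed simp
    qed
    finally show ?thesis by simp
  qed simp
  have "(\<integral>\<^sup>+ z. (\<integral>\<^sup>+ z'. F z z' \<partial>\<pi>) \<partial>\<pi>) =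
     (\<Sum>z\<in>Xs a \<times> Xs b. ennreal (hr z) * (\<integral>\<^sup>+ z'. F z z' \<partial>\<pi>))"
    unfolding \<pi>_def by (rule nn_integral_point_measure_finite) simp
  also have "\<dots> = 0" using in0 by simp
  finally have "(\<integral>\<^sup>+ z. (\<integral>\<^sup>+ z'. F z z' \<partial>\<pi>) \<partial>\<pi>) = 0" .
  then have d0: "dist_Lp p (XX a) (XX b) \<pi> = 0"
    by (simp add: dist_Lp_def XX_def F_def)
  have "PGW_eps \<epsilon> p (XX a) (XX b) \<le> 0"
    unfolding PGW_eps_def
    by (rule cInf_lower2[of 0]) (use coup d0 in \<open>auto intro!: bdd_belowI[of _ 0] simp: dist_Lp_nonneg\<close>)
  also have "0 \<le> k * \<epsilon>" using assms e0 by simp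
  finally have "\<epsilon> / (1 + \<epsilon>) \<in> {\<epsilon> / (1 + \<epsilon>) | \<epsilon>. \<epsilon> \<ge> 0 \<and> PGW_eps \<epsilon> p (XX a) (XX b) \<le> k * \<epsilon>}"
    using e0 by blast
  then have "PGW_k k p (XX a) (XX b) \<le> \<epsilon> / (1 + \<epsilon>)"
    unfolding PGW_k_def by (rule cInf_lower) (auto intro!: bdd_belowI[of _ 0])
  then show ?thesis using ee q_def by simp
qed

definition II :: "real \<Rightarrow> (real \<Rightarrow> real \<Rightarrow> real) \<Rightarrow> (real \<times> real) measure \<Rightarrow> ennreal" where
  "II p dY \<pi> = (\<integral>\<^sup>+ z. \<integral>\<^sup>+ z'. ennreal (\<bar>dist (fst z) (fst z') - dY (snd z) (snd z')\<bar> powr p) \<partial>\<pi> \<partial>\<pi>)"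

lemma dist_Lp_XX: "dist_Lp p (XX n) (Y, dY, \<nu>) \<pi> = enn2real (II p dY \<pi>) powr (1/p)"
  by (simp add: dist_Lp_def XX_def II_def)

lemma Xs_bd: "x \<in> Xs n \<Longrightarrow> 0 \<le> x \<and> x \<le> real n" by (auto simp: Xs_def)

lemma cont_meas:
  assumes "continuous_map S T f" shows "f \<in> measurable (borel_of S) (borel_of T)"
proof -
  have "f \<in> measurable (borel_of S) (measure_of (topspace T) {U. openin T U} (\<lambda>_. 0))"
  proof (rule measurable_measure_of)
    show "{U. openin T U} \<subseteq> Pow (topspace T)" using openin_subset[of T] by blast
    show "f \<in> space (borel_of S) \<rightarrow> topspace T"
      using continuous_map_image_subset_topspace[OF assms] by auto
    fix U assume "U \<in> {U. openin T U}"
    then have "openin S {x \<in> topspace S. f x \<in> U}"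
      using openin_continuous_map_preimage[OF assms] by simp
    then have "{x \<in> topspace S. f x \<in> U} \<in> sets (borel_of S)" by (rule borel_of_sets_open)
    moreover have "f -` U \<inter> space (borel_of S) = {x \<in> topspace S. f x \<in> U}" by auto
    ultimately show "f -` U \<inter> space (borel_of S) \<in> sets (borel_of S)" by simp
  qed
  then show ?thesis unfolding borel_of_def by simp
qed

lemma prodcoup:
  assumes MY: "Metric_space Y dY" and nu: "prob_space \<nu>" "space \<nu> = Y"
    "sets \<nu> = sets (borel_of (Metric_space.mtopology Y dY))" and e: "0 \<le> \<epsilon>"
  shows "distr (point_measure (Xs n) (fm n) \<Otimes>\<^sub>M \<nu>)
     (borel_of (prod_topology (TX n) (Metric_space.mtopology Y dY))) (\<lambda>z. z)
     \<in> pgw_couplings \<epsilon> (XX n) (Y, dY, \<nu>)"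
proof -
  let ?TY = "Metric_space.mtopology Y dY"
  let ?T = "prod_topology (TX n) ?TY"
  let ?M = "borel_of ?T"
  let ?\<mu> = "point_measure (Xs n) (fm n)"
  let ?P = "?\<mu> \<Otimes>\<^sub>M \<nu>"
  have tY: "topspace ?TY = Y" by (rule Metric_space.topspace_mtopology[OF MY])
  have tT: "topspace ?T = Xs n \<times> Y" by (simp add: tY)
  have spP: "space ?P = Xs n \<times> Y" by (simp add: space_pair_measure space_point_measure nu)
  have opn: "U \<in> sets ?P" if U: "openin ?T U" for U
  proof -
    have Usub: "U \<subseteq> Xs n \<times> Y" using openin_subset[OF U] tT by simp
    have sl: "{y \<in> Y. (x, y) \<in> U} \<in> sets \<nu>" if x: "x \<in> Xs n" for x
    proof -
      have "continuous_map ?TY ?T (\<lambda>y. (x, y))"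
        using x by (intro continuous_map_pairedI) (auto simp: continuous_map_const)
      from openin_continuous_map_preimage[OF this U]
      have "openin ?TY {y \<in> Y. (x, y) \<in> U}" by (simp add: tY)
      then show ?thesis by (simp add: nu(3) borel_of_sets_open)
    qed
    have "U = (\<Union>x\<in>Xs n. {x} \<times> {y \<in> Y. (x, y) \<in> U})" using Usub by auto
    also have "\<dots> \<in> sets ?P"
      by (intro sets.finite_UN) (auto intro!: pair_measureI sl simp: sets_point_measure)
    finally show ?thesis .
  qed
  have meas: "(\<lambda>z. z) \<in> measurable ?P ?M"
    unfolding borel_of_def
  proof (rule measurable_measure_of)
    show "{U. openin ?T U} \<subseteq> Pow (topspace ?T)" using openin_subset[of ?T] by blast
    show "(\<lambda>z. z) \<in> space ?P \<rightarrow> topspace ?T" by (simp add: spP tY)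
    fix U assume "U \<in> {U. openin ?T U}"
    then have "openin ?T U" by simp
    moreover have "U \<subseteq> space ?P" using openin_subset[OF \<open>openin ?T U\<close>] tT spP by simp
    ultimately show "(\<lambda>z. z) -` U \<inter> space ?P \<in> sets ?P" using opn by (simp add: Int_absorb2)
  qed
  have P: "prob_space ?P" by (rule prob_space_pair[OF prob_XX nu(1)])
  interpret nuS: sigma_finite_measure \<nu> by (rule prob_space_imp_sigma_finite[OF nu(1)])
  have nu1: "emeasure \<nu> Y = 1" using prob_space.emeasure_space_1[OF nu(1)] nu(2) by simp
  have mu1: "emeasure ?\<mu> (Xs n) = 1"
    using prob_space.emeasure_space_1[OF prob_XX] by (simp add: space_point_measure)
  have le1: "x \<le> ennreal (1 + \<epsilon>) * x" for x :: ennreal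
  proof -
    have "x = 1 * x" by simp
    also have "\<dots> \<le> ennreal (1 + \<epsilon>) * x"
      by (rule mult_right_mono) (use e in \<open>auto simp: ennreal_1[symmetric] simp del: ennreal_1 intro!: ennreal_leI\<close>)
    finally show ?thesis .
  qed
  show ?thesis unfolding XX_def
  proof (rule coupI)
    show "prob_space (distr ?P ?M (\<lambda>z. z))" by (rule prob_space.prob_space_distr[OF P meas])
    show "space (distr ?P ?M (\<lambda>z. z)) = Xs n \<times> Y" by (simp add: tY)
    show "sets (distr ?P ?M (\<lambda>z. z)) = sets ?M" by simp
  next
    fix A assume "A \<in> sets ?\<mu>"
    then have A: "A \<subseteq> Xs n" "A \<in> sets ?\<mu>" by (auto simp: sets_point_measure)
    have "openin ?T (A \<times> Y)"
      by (subst openin_prod_Times_iff) (use A Xs_open[of A n] openin_topspace[of ?TY] tY in auto)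
    then have AM: "A \<times> Y \<in> sets ?M" by (rule borel_of_sets_open)
    have "emeasure (distr ?P ?M (\<lambda>z. z)) (A \<times> Y) = emeasure ?P (A \<times> Y)"
      using A by (simp add: emeasure_distr[OF meas AM] spP Int_absorb2 Sigma_mono)
    also have "\<dots> = emeasure ?\<mu> A * emeasure \<nu> Y"
      by (rule nuS.emeasure_pair_measure_Times[OF A(2)]) (metis nu(2) sets.top)
    also have "\<dots> = emeasure ?\<mu> A" by (simp add: nu1)
    also have "\<dots> \<le> ennreal (1 + \<epsilon>) * emeasure ?\<mu> A" by (rule le1)
    finally show "emeasure (distr ?P ?M (\<lambda>z. z)) (A \<times> Y) \<le> ennreal (1 + \<epsilon>) * emeasure ?\<mu> A" .
  next
    fix B assume B: "B \<in> sets \<nu>"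
    have BY: "B \<subseteq> Y" using sets.sets_into_space[OF B] nu(2) by simp
    have "snd \<in> measurable ?M (borel_of ?TY)"
      by (rule cont_meas) (rule continuous_map_snd)
    from measurable_sets[OF this, of B] have "snd -` B \<inter> space ?M \<in> sets ?M"
      using B nu(3) by simp
    moreover have "snd -` B \<inter> space ?M = Xs n \<times> B" using BY by (auto simp: tY)
    ultimately have BM: "Xs n \<times> B \<in> sets ?M" by simp
    have "emeasure (distr ?P ?M (\<lambda>z. z)) (Xs n \<times> B) = emeasure ?P (Xs n \<times> B)"
      using BY by (simp add: emeasure_distr[OF meas BM] spP Int_absorb2 Sigma_mono)
    also have "\<dots> = emeasure ?\<mu> (Xs n) * emeasure \<nu> B"
      by (rule nuS.emeasure_pair_measure_Times[OF _ B]) (simp add: sets_point_measure)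
    also have "\<dots> = emeasure \<nu> B" by (simp add: mu1)
    also have "\<dots> \<le> ennreal (1 + \<epsilon>) * emeasure \<nu> B" by (rule le1)
    finally show "emeasure (distr ?P ?M (\<lambda>z. z)) (Xs n \<times> B) \<le> ennreal (1 + \<epsilon>) * emeasure \<nu> B" .
  qed
qed

lemma II_ub:
  assumes MY: "Metric_space Y dY" and bd: "\<And>y y'. y \<in> Y \<Longrightarrow> y' \<in> Y \<Longrightarrow> dY y y' \<le> D"
    and p: "0 \<le> p" and P: "prob_space \<pi>" "space \<pi> = Xs n \<times> Y"
  shows "II p dY \<pi> \<le> ennreal ((real n + D) powr p)"
proof -
  let ?C = "ennreal ((real n + D) powr p)"
  have pt: "ennreal (\<bar>dist (fst z) (fst z') - dY (snd z) (snd z')\<bar> powr p) \<le> ?C"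
    if "z \<in> space \<pi>" "z' \<in> space \<pi>" for z z'
  proof -
    have z: "fst z \<in> Xs n" "snd z \<in> Y" "fst z' \<in> Xs n" "snd z' \<in> Y" using that P(2) by (auto simp only: mem_Times_iff)
    have "dist (fst z) (fst z') \<le> real n" using Xs_bd[OF z(1)] Xs_bd[OF z(3)]
      by (simp add: dist_real_def abs_le_iff)
    moreover have "0 \<le> dY (snd z) (snd z')" by (rule Metric_space.nonneg[OF MY])
    moreover have "dY (snd z) (snd z') \<le> D" using bd z by simp
    moreover have "0 \<le> dist (fst z) (fst z')" by simp
    ultimately have "\<bar>dist (fst z) (fst z') - dY (snd z) (snd z')\<bar> \<le> real n + D"
      by (simp only: abs_le_iff) linarith
    then show ?thesis by (intro ennreal_leI powr_mono2 p abs_ge_zero)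
  qed
  have sp1: "emeasure \<pi> (space \<pi>) = 1" by (rule prob_space.emeasure_space_1[OF P(1)])
  have inner: "(\<integral>\<^sup>+ z'. ennreal (\<bar>dist (fst z) (fst z') - dY (snd z) (snd z')\<bar> powr p) \<partial>\<pi>) \<le> ?C"
    if "z \<in> space \<pi>" for z
  proof -
    have "(\<integral>\<^sup>+ z'. ennreal (\<bar>dist (fst z) (fst z') - dY (snd z) (snd z')\<bar> powr p) \<partial>\<pi>)
        \<le> (\<integral>\<^sup>+ z'. ?C \<partial>\<pi>)" by (rule nn_integral_mono) (rule pt[OF that])
    also have "\<dots> = ?C" by (simp add: sp1)
    finally show ?thesis .
  qed
  have "II p dY \<pi> \<le> (\<integral>\<^sup>+ z. ?C \<partial>\<pi>)" unfolding II_def by (rule nn_integral_mono) (rule inner)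
  also have "\<dots> = ?C" by (simp add: sp1)
  finally show ?thesis .
qed

lemma mass_lb:
  assumes P: "\<pi> \<in> pgw_couplings \<epsilon> (XX n) (Y, dY, \<nu>)" and MY: "Metric_space Y dY"
    and a: "a \<in> Xs n" and e: "0 \<le> \<epsilon>"
  shows "{a} \<times> Y \<in> sets \<pi>" "(1 + \<epsilon>) * fr n a - \<epsilon> \<le> measure \<pi> ({a} \<times> Y)"
proof -
  let ?TY = "Metric_space.mtopology Y dY"
  let ?\<mu> = "point_measure (Xs n) (fm n)"
  have tY: "topspace ?TY = Y" by (rule Metric_space.topspace_mtopology[OF MY])
  from P have pr: "prob_space \<pi>" and sp: "space \<pi> = Xs n \<times> Y"
    and st: "sets \<pi> = sets (borel_of (prod_topology (TX n) ?TY))"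
    and mg: "\<And>A. A \<in> sets ?\<mu> \<Longrightarrow> emeasure \<pi> (A \<times> Y) \<le> ennreal (1 + \<epsilon>) * emeasure ?\<mu> A"
    using coupD[OF P[unfolded XX_def]] by auto
  interpret prob_space \<pi> by (rule pr)
  have opS: "S \<times> Y \<in> sets \<pi>" if "S \<subseteq> Xs n" for S
  proof -
    have "openin (prod_topology (TX n) ?TY) (S \<times> Y)"
      by (subst openin_prod_Times_iff) (use that Xs_open[of S n] openin_topspace[of ?TY] tY in auto)
    then show ?thesis unfolding st by (rule borel_of_sets_open)
  qed
  show A: "{a} \<times> Y \<in> sets \<pi>" using a by (intro opS) auto
  have A': "(Xs n - {a}) \<times> Y \<in> sets \<pi>" by (intro opS) auto
  have compl: "(Xs n - {a}) \<times> Y = space \<pi> - {a} \<times> Y" using sp by auto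
  have m1: "measure \<pi> ((Xs n - {a}) \<times> Y) = 1 - measure \<pi> ({a} \<times> Y)"
    unfolding compl by (rule prob_compl[OF A])
  have h: "(1/2::real)^m \<le> 1" for m by (rule power_le_one) auto
  have frle: "fr n a \<le> 1" unfolding fr_def by (split if_split) (simp only: h simp_thms)
  have "emeasure ?\<mu> (Xs n - {a}) = (\<Sum>x\<in>Xs n - {a}. fm n x)"
    by (rule emeasure_point_measure_finite) auto
  also have "\<dots> = ennreal (\<Sum>x\<in>Xs n - {a}. fr n x)"
    unfolding fm_def by (rule sum_ennreal) (rule fr_nonneg)
  also have "(\<Sum>x\<in>Xs n - {a}. fr n x) = 1 - fr n a"
    using sum_diff1[of "Xs n" "fr n" a] a sum_fr[of n] by simp
  finally have mu: "emeasure ?\<mu> (Xs n - {a}) = ennreal (1 - fr n a)" .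
  have "ennreal (measure \<pi> ((Xs n - {a}) \<times> Y)) \<le> ennreal (1 + \<epsilon>) * ennreal (1 - fr n a)"
    using mg[of "Xs n - {a}"] by (simp add: emeasure_eq_measure sets_point_measure mu)
  also have "\<dots> = ennreal ((1 + \<epsilon>) * (1 - fr n a))"
    using frle e by (intro ennreal_mult[symmetric]) auto
  finally have "measure \<pi> ((Xs n - {a}) \<times> Y) \<le> (1 + \<epsilon>) * (1 - fr n a)"
    by (rule ennreal_le_iff[THEN iffD1, rotated]) (use frle e in simp)
  then show "(1 + \<epsilon>) * fr n a - \<epsilon> \<le> measure \<pi> ({a} \<times> Y)" using m1 by (simp add: algebra_simps)
qed

lemma II_lb:
  assumes P: "\<pi> \<in> pgw_couplings \<epsilon> (XX n) (Y, dY, \<nu>)" and MY: "Metric_space Y dY"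
    and bd: "\<And>y y'. y \<in> Y \<Longrightarrow> y' \<in> Y \<Longrightarrow> dY y y' \<le> D" and p: "0 \<le> p"
    and e: "0 \<le> \<epsilon>" "\<epsilon> \<le> 1/2" "\<epsilon> \<le> (1/2)^Suc j / 2"
    and j: "D + 1 \<le> real j" "j < n"
  shows "ennreal ((1/2)^Suc j / 8) \<le> II p dY \<pi>"
proof -
  define w where "w = (1/2::real)^Suc j"
  have w0: "0 \<le> w" by (simp add: w_def)
  have x0: "(0::real) \<in> Xs n" and jX: "real j \<in> Xs n" using j by (auto simp: Xs_def)
  note mA = mass_lb[OF P MY x0 e(1)] and mB = mass_lb[OF P MY jX e(1)]
  have f0: "fr n 0 = 1/2" using j by (simp add: fr_def)
  have fj: "fr n (real j) = w" using j by (simp add: fr_def w_def)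
  let ?A = "{0::real} \<times> Y" and ?B = "{real j} \<times> Y"
  interpret prob_space \<pi> using coupD(1)[OF P[unfolded XX_def]] .
  have a: "1/4 \<le> measure \<pi> ?A" using mA(2) f0 e by simp
  have ew: "0 \<le> \<epsilon> * w" using e w0 by simp
  have e3: "\<epsilon> \<le> w/2" using e(3) unfolding w_def .
  have m: "(1 + \<epsilon>) * w - \<epsilon> \<le> measure \<pi> ?B" using mB(2) unfolding fj .
  have dd: "(1 + \<epsilon>) * w = w + \<epsilon> * w" by (simp add: algebra_simps)
  have b: "w/2 \<le> measure \<pi> ?B" using m e3 ew unfolding dd by linarith
  define F where "F z z' = ennreal (\<bar>dist (fst z) (fst z') - dY (snd z) (snd z')\<bar> powr p)"
    for z z' :: "real \<times> real"
  have pt: "indicator ?A z * indicator ?B z' \<le> F z z'" for z z'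
  proof (cases "z \<in> ?A \<and> z' \<in> ?B")
    case True
    then have z: "fst z = 0" "snd z \<in> Y" "fst z' = real j" "snd z' \<in> Y" by auto
    have "dY (snd z) (snd z') \<le> D" using bd z by simp
    then have "1 \<le> \<bar>dist (fst z) (fst z') - dY (snd z) (snd z')\<bar>" using z j
      by (simp add: dist_real_def)
    then have "1 \<le> \<bar>dist (fst z) (fst z') - dY (snd z) (snd z')\<bar> powr p"
      by (rule ge_one_powr_ge_zero) (rule p)
    then have "ennreal 1 \<le> F z z'" unfolding F_def by (rule ennreal_leI)
    then show ?thesis using True by simp
  next
    case False
    then have "indicator ?A z * indicator ?B z' = (0::ennreal)"
      unfolding indicator_def by auto
    then show ?thesis by (simp only: zero_le)
  qed
  have inner: "indicator ?A z * emeasure \<pi> ?B \<le> (\<integral>\<^sup>+ z'. F z z' \<partial>\<pi>)" for z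
  proof -
    have "indicator ?A z * emeasure \<pi> ?B = (\<integral>\<^sup>+ z'. indicator ?A z * indicator ?B z' \<partial>\<pi>)"
      by (rule nn_integral_cmult_indicator[OF mB(1), symmetric])
    also have "\<dots> \<le> (\<integral>\<^sup>+ z'. F z z' \<partial>\<pi>)" by (rule nn_integral_mono) (rule pt)
    finally show ?thesis .
  qed
  have "emeasure \<pi> ?B * emeasure \<pi> ?A = (\<integral>\<^sup>+ z. emeasure \<pi> ?B * indicator ?A z \<partial>\<pi>)"
    by (rule nn_integral_cmult_indicator[OF mA(1), symmetric])
  also have "\<dots> \<le> II p dY \<pi>" unfolding II_def F_def[symmetric]
    by (rule nn_integral_mono) (simp add: inner mult.commute)
  finally have I: "emeasure \<pi> ?B * emeasure \<pi> ?A \<le> II p dY \<pi>" .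
  have "emeasure \<pi> ?B * emeasure \<pi> ?A = ennreal (measure \<pi> ?B * measure \<pi> ?A)"
    by (simp add: emeasure_eq_measure ennreal_mult)
  moreover have "w / 8 \<le> measure \<pi> ?B * measure \<pi> ?A"
  proof -
    have "w / 2 * (1/4) \<le> measure \<pi> ?B * measure \<pi> ?A"
      by (rule mult_mono) (use a b w0 in auto)
    then show ?thesis by simp
  qed
  ultimately have "ennreal (w / 8) \<le> emeasure \<pi> ?B * emeasure \<pi> ?A" by (simp add: ennreal_leI)
  with I show ?thesis unfolding w_def by simp
qed

definition c0 :: "nat \<Rightarrow> real \<Rightarrow> real" where "c0 j p = ((1/2)^Suc j / 8) powr (1/p)"
definition eps0 :: "nat \<Rightarrow> real \<Rightarrow> real \<Rightarrow> real" where
  "eps0 j p k = min (min (1/2) ((1/2)^Suc j / 2)) (c0 j p / (2 * k))"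

lemma c0_pos: "0 < c0 j p" by (simp add: c0_def)
lemma eps0_pos: "0 < k \<Longrightarrow> 0 < eps0 j p k" by (simp add: eps0_def c0_pos)

lemma PGW_lb:
  fixes Y :: "real set" and dY :: "real \<Rightarrow> real \<Rightarrow> real" and \<nu> :: "real measure"
  assumes MY: "Metric_space Y dY" and nu: "prob_space \<nu>" "space \<nu> = Y"
    "sets \<nu> = sets (borel_of (Metric_space.mtopology Y dY))"
    and bd: "\<And>y y'. y \<in> Y \<Longrightarrow> y' \<in> Y \<Longrightarrow> dY y y' \<le> D" and D0: "0 \<le> D"
    and p: "1 \<le> p" and k: "0 < k" and j: "D + 1 \<le> real j" "j < n"
  shows "eps0 j p k / (1 + eps0 j p k) \<le> PGW_k k p (XX n) (Y, dY, \<nu>)"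
proof -
  let ?C = "pgw_couplings"
  let ?e0 = "eps0 j p k"
  let ?c = "c0 j p"
  define \<pi>0 where "\<pi>0 = distr (point_measure (Xs n) (fm n) \<Otimes>\<^sub>M \<nu>)
     (borel_of (prod_topology (TX n) (Metric_space.mtopology Y dY))) (\<lambda>z. z)"
  have ne: "\<pi>0 \<in> ?C \<epsilon> (XX n) (Y, dY, \<nu>)" if "0 \<le> \<epsilon>" for \<epsilon>
    unfolding \<pi>0_def by (rule prodcoup[OF MY nu that])
  have p0: "0 \<le> p" using p by simp
  have ub: "II p dY \<pi> \<le> ennreal ((real n + D) powr p)" if "\<pi> \<in> ?C \<epsilon> (XX n) (Y, dY, \<nu>)" for \<pi> \<epsilon>
    using coupD[OF that[unfolded XX_def]] by (intro II_ub[OF MY bd p0]) auto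
  have fin: "II p dY \<pi> < top" if "\<pi> \<in> ?C \<epsilon> (XX n) (Y, dY, \<nu>)" for \<pi> \<epsilon>
    using ub[OF that] by (simp add: order_le_less_trans)
  have dub: "dist_Lp p (XX n) (Y, dY, \<nu>) \<pi> \<le> real n + D" if "\<pi> \<in> ?C \<epsilon> (XX n) (Y, dY, \<nu>)" for \<pi> \<epsilon>
  proof -
    have "enn2real (II p dY \<pi>) \<le> enn2real (ennreal ((real n + D) powr p))"
      by (rule enn2real_mono[OF ub[OF that]]) simp
    then have "enn2real (II p dY \<pi>) \<le> (real n + D) powr p" by simp
    then have "enn2real (II p dY \<pi>) powr (1/p) \<le> ((real n + D) powr p) powr (1/p)"
      by (rule powr_mono2[rotated 2]) (use p in auto)
    also have "\<dots> = real n + D" using p D0 by (simp add: powr_powr powr_one)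
    finally show ?thesis by (simp add: dist_Lp_XX)
  qed
  have dlb: "?c \<le> dist_Lp p (XX n) (Y, dY, \<nu>) \<pi>"
    if \<pi>: "\<pi> \<in> ?C \<epsilon> (XX n) (Y, dY, \<nu>)" and e: "0 \<le> \<epsilon>" "\<epsilon> \<le> ?e0" for \<pi> \<epsilon>
  proof -
    have e': "\<epsilon> \<le> 1/2" "\<epsilon> \<le> (1/2)^Suc j / 2" using e(2) by (auto simp: eps0_def)
    have "ennreal ((1/2)^Suc j / 8) \<le> II p dY \<pi>"
      by (rule II_lb[OF \<pi> MY bd p0 e(1) e' j])
    from enn2real_mono[OF this fin[OF \<pi>]]
    have "(1/2)^Suc j / 8 \<le> enn2real (II p dY \<pi>)" by simp
    then have "((1/2)^Suc j / 8) powr (1/p) \<le> enn2real (II p dY \<pi>) powr (1/p)"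
      by (rule powr_mono2[rotated 2]) (use p in auto)
    then show ?thesis by (simp add: dist_Lp_XX c0_def)
  qed
  have PGWlb: "?c \<le> PGW_eps \<epsilon> p (XX n) (Y, dY, \<nu>)" if e: "0 \<le> \<epsilon>" "\<epsilon> \<le> ?e0" for \<epsilon>
    unfolding PGW_eps_def
    by (rule cInf_greatest) (use ne[OF e(1)] dlb[OF _ e] in auto)
  define S where "S = {\<epsilon> / (1 + \<epsilon>) | \<epsilon>. \<epsilon> \<ge> 0 \<and> PGW_eps \<epsilon> p (XX n) (Y, dY, \<nu>) \<le> k * \<epsilon>}"
  define \<epsilon>1 where "\<epsilon>1 = (real n + D) / k"
  have e1: "0 \<le> \<epsilon>1" using D0 k by (simp add: \<epsilon>1_def)
  have "PGW_eps \<epsilon>1 p (XX n) (Y, dY, \<nu>) \<le> real n + D"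
    unfolding PGW_eps_def
  proof (rule cInf_lower2)
    show "dist_Lp p (XX n) (Y, dY, \<nu>) \<pi>0 \<in> dist_Lp p (XX n) (Y, dY, \<nu>) ` ?C \<epsilon>1 (XX n) (Y, dY, \<nu>)"
      using ne[OF e1] by (rule imageI)
    show "dist_Lp p (XX n) (Y, dY, \<nu>) \<pi>0 \<le> real n + D" by (rule dub[OF ne[OF e1]])
    show "bdd_below (dist_Lp p (XX n) (Y, dY, \<nu>) ` ?C \<epsilon>1 (XX n) (Y, dY, \<nu>))"
      by (rule bdd_belowI[of _ 0]) (auto simp: dist_Lp_nonneg)
  qed
  also have "\<dots> = k * \<epsilon>1" using k by (simp add: \<epsilon>1_def)
  finally have "\<epsilon>1 / (1 + \<epsilon>1) \<in> S" using e1 unfolding S_def by blast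
  then have Sne: "S \<noteq> {}" by auto
  have "?e0 / (1 + ?e0) \<le> s" if "s \<in> S" for s
  proof -
    obtain \<epsilon> where s: "s = \<epsilon> / (1 + \<epsilon>)" and e: "0 \<le> \<epsilon>"
      and le: "PGW_eps \<epsilon> p (XX n) (Y, dY, \<nu>) \<le> k * \<epsilon>"
      using \<open>s \<in> S\<close> unfolding S_def by blast
    have "?e0 < \<epsilon>"
    proof (rule ccontr)
      assume "\<not> ?e0 < \<epsilon>"
      then have ee: "\<epsilon> \<le> ?e0" by simp
      have "?c \<le> k * \<epsilon>" using PGWlb[OF e ee] le by simp
      also have "k * \<epsilon> \<le> k * ?e0" using ee k by simp
      also have "k * ?e0 \<le> k * (?c / (2 * k))"
        using k by (intro mult_left_mono) (auto simp: eps0_def)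
      also have "\<dots> = ?c / 2" using k by simp
      finally show False using c0_pos[of j p] by simp
    qed
    moreover have "0 < ?e0" using eps0_pos[OF k] .
    ultimately show ?thesis unfolding s using e by (simp add: field_simps)
  qed
  then have "?e0 / (1 + ?e0) \<le> Inf S" using Sne by (intro cInf_greatest) auto
  then show ?thesis by (simp add: PGW_k_def S_def)
qed

theorem theorem4p6:
  fixes p k :: real
  assumes "1 \<le> p" and "0 < k"
  shows "\<exists>\<X> :: nat \<Rightarrow> real pmm.
           (\<forall>n. compact_pmm_space (\<X> n)) \<and>
           (\<forall>e>0. \<exists>N. \<forall>m\<ge>N. \<forall>n\<ge>N. PGW_k k p (\<X> m) (\<X> n) < e) \<and>
           \<not> (\<exists>\<Y> :: real pmm. compact_pmm_space \<Y> \<and>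
                 (\<lambda>n. PGW_k k p (\<X> n) \<Y>) \<longlonglongrightarrow> 0)"
proof (intro exI[of _ XX] conjI allI impI)
  show "compact_pmm_space (XX n)" for n by (rule compact_XX)
next
  fix e :: real assume e: "0 < e"
  have "(\<lambda>n. (1/2::real)^n) \<longlonglongrightarrow> 0" by (rule LIMSEQ_power_zero) simp
  from order_tendstoD(2)[OF this e] obtain N0 where N0: "\<And>n. n \<ge> N0 \<Longrightarrow> (1/2::real)^n < e"
    unfolding eventually_sequentially by blast
  define N where "N = max 1 N0"
  have "PGW_k k p (XX m) (XX n) < e" if "m \<ge> N" "n \<ge> N" for m n
  proof -
    have "PGW_k k p (XX m) (XX n) \<le> (1/2)^N"
      using that assms by (intro cauchy_bound) (auto simp: N_def)
    also have "\<dots> < e" using N0[of N] by (simp add: N_def)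
    finally show ?thesis .
  qed
  then show "\<exists>N. \<forall>m\<ge>N. \<forall>n\<ge>N. PGW_k k p (XX m) (XX n) < e" by blast
next
  show "\<not> (\<exists>\<Y> :: real pmm. compact_pmm_space \<Y> \<and> (\<lambda>n. PGW_k k p (XX n) \<Y>) \<longlonglongrightarrow> 0)"
  proof
    assume "\<exists>\<Y> :: real pmm. compact_pmm_space \<Y> \<and> (\<lambda>n. PGW_k k p (XX n) \<Y>) \<longlonglongrightarrow> 0"
    then obtain Y0 :: "real pmm" where cY0: "compact_pmm_space Y0"
      and lim0: "(\<lambda>n. PGW_k k p (XX n) Y0) \<longlonglongrightarrow> 0" by blast
    obtain Y dY \<nu> where Y0: "Y0 = (Y, dY, \<nu>)" by (cases Y0) blast
    have cY: "compact_pmm_space (Y, dY, \<nu>)" using cY0 Y0 by simp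
    have lim: "(\<lambda>n. PGW_k k p (XX n) (Y, dY, \<nu>)) \<longlonglongrightarrow> 0" using lim0 Y0 by simp
    from cY have MY: "Metric_space Y dY" and nu: "prob_space \<nu>" "space \<nu> = Y"
      "sets \<nu> = sets (borel_of (Metric_space.mtopology Y dY))"
      and cs: "compact_space (Metric_space.mtopology Y dY)"
      unfolding compact_pmm_space_def pmm_space_def by simp_all
    have "compactin (Metric_space.mtopology Y dY) Y"
      using cs unfolding compact_space_def by (simp add: Metric_space.topspace_mtopology[OF MY])
    then have "Metric_space.mbounded Y dY Y" by (rule Metric_space.compactin_imp_mbounded[OF MY])
    then obtain B where B: "\<And>y y'. y \<in> Y \<Longrightarrow> y' \<in> Y \<Longrightarrow> dY y y' \<le> B"
      unfolding Metric_space.mbounded_alt[OF MY] by blast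
    define D where "D = max 0 B"
    have bd: "\<And>y y'. y \<in> Y \<Longrightarrow> y' \<in> Y \<Longrightarrow> dY y y' \<le> D"
      using B unfolding D_def by (meson max.coboundedI2)
    have D0: "0 \<le> D" by (simp add: D_def)
    define j where "j = nat \<lceil>D\<rceil> + 1"
    have "D \<le> real (nat \<lceil>D\<rceil>)" by (rule real_nat_ceiling_ge)
    then have j: "D + 1 \<le> real j" unfolding j_def by simp
    define \<delta> where "\<delta> = eps0 j p k / (1 + eps0 j p k)"
    have \<delta>0: "0 < \<delta>" using eps0_pos[OF assms(2), of j p] by (simp add: \<delta>_def)
    from order_tendstoD(2)[OF lim \<delta>0] obtain N0 where
      N0: "\<And>n. n \<ge> N0 \<Longrightarrow> PGW_k k p (XX n) (Y, dY, \<nu>) < \<delta>"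
      unfolding eventually_sequentially by blast
    define n where "n = max N0 (j + 1)"
    have jn: "j < n" unfolding n_def by linarith
    have "\<delta> \<le> PGW_k k p (XX n) (Y, dY, \<nu>)" unfolding \<delta>_def
      by (rule PGW_lb[OF MY nu bd D0 assms j jn])
    with N0[of n] show False by (simp add: n_def)
  qed
qed

end
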